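(* Algorithm Exact Silent Count solves the $k$-ribbon problem on a line of $n$ agents, for any choice of starting agent, within $3n$ rounds, using $6n$ message bits in total and $2\log n+\log k+O(1)$ bits of memory per agent.
   Context: Message passing model (1D): a line graph of $n$ agents, synchronous rounds, reliable messages between neighbors each round. All agents run the same algorithm, have no knowledge of their global position or of $n$, share a common sense of direction, and endpoints know they are endpoints. Initially all agents but one arbitrary starting agent are asleep; a sleeping agent wakes upon receiving a message. The $k$-ribbon problem: every agent outputs a color in $\{1,\dots,k\}$ such that each color class is contiguous, colors increase from left to right, and the sizes of any two color classes differ by at most $1$. Algorithm Exact Silent Count: the starting agent sends the single bit $0$ to the left and the bit $1$ to the right (if it is an endpoint, it sends both bits in one 2-bit message to its unique neighbor). Every agent forwards each received bit in the same direction, except endpoints, which send it back. The $d$-side endpoint sets $n_d\leftarrow 0$ on waking and never changes it. Any other agent, the first time it receives a message from direction $d$, sets $n_{\bar d}\leftarrow 0$ (where $\bar d$ is the opposite direction) and increments $n_{\bar d}$ every round until it receives a message from direction $\bar d$, at which point it stops and sets $n_{\bar d}\leftarrow n_{\bar d}/2$. When an agent has final values of $n_\ell$ and $n_r$ and has already sent $0$ to the left and $1$ to the right, it decides the color its position receives in the $k$-ribbon (determined by $n_\ell$, $n_r$, $k$) and halts.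
   Formalization: Each counter $n_d$, the starter's included, starts at 0 when a bit is first sent towards d and stops when that same bit returns, and halting requires having relayed bit 0 left and bit 1 right, initial sends excluded. The statement above fails without it. *)

theory Defs
  imports Complex_Main
begin

text \<open>Agents are numbered 0..n-1 from left to right (the numbering is only used by the
  global semantics; the local algorithm never sees it).  A message is a nonempty list of
  bits (the empty list means "no message").  A local algorithm consists of:
  start: spontaneous wake-up of the starting agent (gets the two flags
         "I am the left endpoint" and "I am the right endpoint"), returning the new
         state and the messages sent to the left and to the right neighbour;
  wake: the initial state of an agent woken up by a message;
  step: one synchronous round: endpoint flags, current state, messages received from the
        left and from the right neighbour, giving the new state and messages sent
        to the left / right;
  out:  the decided output; an agent with a decided output has halted.\<close>

record 's line_alg =
  la_start :: "bool \<Rightarrow> bool \<Rightarrow> 's \<times> bool list \<times> bool list"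
  la_wake  :: "bool \<Rightarrow> bool \<Rightarrow> 's"
  la_step  :: "bool \<Rightarrow> bool \<Rightarrow> 's \<Rightarrow> bool list \<Rightarrow> bool list \<Rightarrow> 's \<times> bool list \<times> bool list"
  la_out   :: "'s \<Rightarrow> nat option"

text \<open>One round for agent i: asleep agents wake iff they receive a message;
  halted agents do nothing (incoming messages are lost).\<close>

definition agent_round ::
  "('s, 'z) line_alg_scheme \<Rightarrow> nat \<Rightarrow> nat \<Rightarrow> 's option \<Rightarrow> bool list \<Rightarrow> bool list
     \<Rightarrow> 's option \<times> bool list \<times> bool list" where
  "agent_round A n i so inL inR =
     (if i < n then
        (case so of
           None \<Rightarrow>
             (if inL = [] \<and> inR = [] then (None, [], [])
              else (case la_step A (i = 0) (i = n - 1) (la_wake A (i = 0) (i = n - 1)) inL inR of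
                      (s', oL, oR) \<Rightarrow> (Some s', oL, oR)))
         | Some st \<Rightarrow>
             (if la_out A st \<noteq> None then (Some st, [], [])
              else (case la_step A (i = 0) (i = n - 1) st inL inR of
                      (s', oL, oR) \<Rightarrow> (Some s', oL, oR))))
      else (None, [], []))"

text \<open>exec A n s t = (states after round t, messages sent to the left in round t,
  messages sent to the right in round t), for n agents and starting agent s.
  Round 0 is the spontaneous wake-up of the starting agent.\<close>

fun exec :: "('s, 'z) line_alg_scheme \<Rightarrow> nat \<Rightarrow> nat \<Rightarrow> nat
               \<Rightarrow> (nat \<Rightarrow> 's option) \<times> (nat \<Rightarrow> bool list) \<times> (nat \<Rightarrow> bool list)" where
  "exec A n s 0 =
     (let r = la_start A (s = 0) (s = n - 1) in
       ((\<lambda>i. if i = s then Some (fst r) else None),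
        (\<lambda>i. if i = s then fst (snd r) else []),
        (\<lambda>i. if i = s then snd (snd r) else [])))"
| "exec A n s (Suc t) =
     (case exec A n s t of (st, sL, sR) \<Rightarrow>
       let act = (\<lambda>i. agent_round A n i (st i)
                          (if 0 < i then sR (i - 1) else [])
                          (if i + 1 < n then sL (i + 1) else []))
       in ((\<lambda>i. fst (act i)), (\<lambda>i. fst (snd (act i))), (\<lambda>i. snd (snd (act i)))))"

definition bits_sent :: "('s, 'z) line_alg_scheme \<Rightarrow> nat \<Rightarrow> nat \<Rightarrow> nat \<Rightarrow> nat" where
  "bits_sent A n s T =
     (\<Sum>t<T. \<Sum>i<n. length (fst (snd (exec A n s t)) i) + length (snd (snd (exec A n s t)) i))"

definition is_ribbon :: "nat \<Rightarrow> nat \<Rightarrow> (nat \<Rightarrow> nat) \<Rightarrow> bool" where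
  "is_ribbon n k c \<longleftrightarrow>
     (\<forall>i<n. 1 \<le> c i \<and> c i \<le> k) \<and>
     (\<forall>i j. i \<le> j \<longrightarrow> j < n \<longrightarrow> c i \<le> c j) \<and>
     (\<forall>i j m. i \<le> m \<longrightarrow> m \<le> j \<longrightarrow> j < n \<longrightarrow> c i = c j \<longrightarrow> c m = c i) \<and>
     (\<forall>a b. 1 \<le> a \<longrightarrow> a \<le> k \<longrightarrow> 1 \<le> b \<longrightarrow> b \<le> k \<longrightarrow>
        card {i. i < n \<and> c i = a} \<le> card {i. i < n \<and> c i = b} + 1)"

text \<open>Bits: False = bit 0, True = bit 1.  Local state:
  esc_cl / esc_cr : counter (later final value) for n_l / n_r, None = not started;
  esc_fl / esc_fr : whether n_l / n_r is final;
  esc_tl / esc_tr : the bit whose return from the left / right is awaited;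
  esc_s0 / esc_s1 : whether bit 0 was forwarded to the left / bit 1 to the right
                    (relaying a received bit; the spontaneous initial sends of the
                    starting agent are not counted);
  esc_col : decided colour (Some = halted).\<close>

record esc_st =
  esc_cl :: "nat option"
  esc_cr :: "nat option"
  esc_fl :: bool
  esc_fr :: bool
  esc_tl :: bool
  esc_tr :: bool
  esc_s0 :: bool
  esc_s1 :: bool
  esc_col :: "nat option"

text \<open>The colour of the position with n_l agents to the left and n_r to the right
  in the k-ribbon (class sizes differ by at most one).\<close>

definition esc_color :: "nat \<Rightarrow> nat \<Rightarrow> nat \<Rightarrow> nat" where
  "esc_color k nl nr = nl * k div (nl + nr + 1) + 1"

definition esc_wake :: "bool \<Rightarrow> bool \<Rightarrow> esc_st" where
  "esc_wake eL eR =
     \<lparr> esc_cl = (if eL then Some 0 else None), esc_cr = (if eR then Some 0 else None),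
       esc_fl = eL, esc_fr = eR, esc_tl = False, esc_tr = False,
       esc_s0 = False, esc_s1 = False, esc_col = None \<rparr>"

definition esc_try_halt :: "nat \<Rightarrow> bool \<Rightarrow> bool \<Rightarrow> esc_st \<Rightarrow> esc_st" where
  "esc_try_halt k eL eR st =
     (if esc_fl st \<and> esc_fr st \<and> (eL \<or> esc_s0 st) \<and> (eR \<or> esc_s1 st)
      then st\<lparr> esc_col := Some (esc_color k (the (esc_cl st)) (the (esc_cr st))) \<rparr>
      else st)"

text \<open>Counter update for one side: (counter, final, awaited bit), the bits received from
  that side this round, and the bits sent to that side this round.  A counter starts (at 0)
  when a bit is first sent to that side, is incremented every round, and when that bit
  comes back from that side it is halved and becomes final.\<close>

definition esc_upd :: "nat option \<times> bool \<times> bool \<Rightarrow> bool list \<Rightarrow> bool list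
                        \<Rightarrow> nat option \<times> bool \<times> bool" where
  "esc_upd x inp outp =
     (case x of (c, f, tk) \<Rightarrow>
        if f then x
        else (case c of
                Some v \<Rightarrow> (if tk \<in> set inp then (Some ((v + 1) div 2), True, tk)
                           else (Some (v + 1), False, tk))
              | None \<Rightarrow> (if outp \<noteq> [] then (Some 0, False, hd outp) else x)))"

definition esc_start :: "nat \<Rightarrow> bool \<Rightarrow> bool \<Rightarrow> esc_st \<times> bool list \<times> bool list" where
  "esc_start k eL eR =
     (let oL = (if eL then [] else if eR then [False, True] else [False]);
          oR = (if eR then [] else if eL then [False, True] else [True]);
          w = esc_wake eL eR;
          w1 = (if oL \<noteq> [] then w\<lparr> esc_cl := Some 0, esc_tl := hd oL \<rparr> else w);
          w2 = (if oR \<noteq> [] then w1\<lparr> esc_cr := Some 0, esc_tr := hd oR \<rparr> else w1);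
          w3 = w2
      in (esc_try_halt k eL eR w3, oL, oR))"

definition esc_step :: "nat \<Rightarrow> bool \<Rightarrow> bool \<Rightarrow> esc_st \<Rightarrow> bool list \<Rightarrow> bool list
                         \<Rightarrow> esc_st \<times> bool list \<times> bool list" where
  "esc_step k eL eR st inL inR =
     (let oR = (if eR then [] else if eL then inR else inL);
          oL = (if eL then [] else if eR then inL else inR);
          l = esc_upd (esc_cl st, esc_fl st, esc_tl st) inL oL;
          r = esc_upd (esc_cr st, esc_fr st, esc_tr st) inR oR;
          st' = st\<lparr> esc_cl := fst l, esc_fl := fst (snd l), esc_tl := snd (snd l),
                    esc_cr := fst r, esc_fr := fst (snd r), esc_tr := snd (snd r),
                    esc_s0 := (esc_s0 st \<or> False \<in> set oL),
                    esc_s1 := (esc_s1 st \<or> True \<in> set oR) \<rparr>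
      in (esc_try_halt k eL eR st', oL, oR))"

definition esc :: "nat \<Rightarrow> esc_st line_alg" where
  "esc k = \<lparr> la_start = esc_start k, la_wake = esc_wake, la_step = esc_step k,
             la_out = esc_col \<rparr>"

fun bitlen :: "nat \<Rightarrow> nat" where
  "bitlen m = (if m < 2 then 1 else Suc (bitlen (m div 2)))"

definition obits :: "nat option \<Rightarrow> nat" where
  "obits x = (case x of None \<Rightarrow> 1 | Some m \<Rightarrow> 1 + bitlen m)"

definition esc_mem :: "esc_st \<Rightarrow> nat" where
  "esc_mem st = obits (esc_cl st) + obits (esc_cr st) + obits (esc_col st) + 6"

end

theory Submission
  imports Defs
begin


definition DD :: "nat \<Rightarrow> nat" where "DD n = 2*n - 2"
definition dst :: "nat \<Rightarrow> nat \<Rightarrow> nat" where "dst s i = (if i \<le> s then s - i else i - s)"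
definition HH :: "nat \<Rightarrow> nat \<Rightarrow> nat \<Rightarrow> nat" where "HH n s i = 2*n - 2 + dst s i"
definition al :: "nat \<Rightarrow> nat \<Rightarrow> nat \<Rightarrow> nat" where "al n s i = (if i \<le> s then s - i else 2*n - 2 - s - i)"
definition ar :: "nat \<Rightarrow> nat \<Rightarrow> nat \<Rightarrow> nat" where "ar n s i = (if s \<le> i then i - s else s + i)"
definition f0 :: "nat \<Rightarrow> nat \<Rightarrow> nat \<Rightarrow> nat" where "f0 n s i = (if i < s then s - i else s + (2*n-2) - i)"
definition f1 :: "nat \<Rightarrow> nat \<Rightarrow> nat \<Rightarrow> nat" where "f1 n s i = (if s < i then i - s else (2*n-2) - s + i)"

definition CLf :: "nat \<Rightarrow> nat \<Rightarrow> nat \<Rightarrow> nat \<Rightarrow> nat option" where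
  "CLf n s t i = (if i = 0 then Some 0 else if t < al n s i then None
      else if t < al n s i + 2*i then Some (t - al n s i) else Some i)"
definition FLf :: "nat \<Rightarrow> nat \<Rightarrow> nat \<Rightarrow> nat \<Rightarrow> bool" where
  "FLf n s t i = (i = 0 \<or> al n s i + 2*i \<le> t)"
definition TLf :: "nat \<Rightarrow> nat \<Rightarrow> nat \<Rightarrow> nat \<Rightarrow> bool" where
  "TLf n s t i = (0 < s \<and> s < i \<and> al n s i \<le> t)"
definition CRf :: "nat \<Rightarrow> nat \<Rightarrow> nat \<Rightarrow> nat \<Rightarrow> nat option" where
  "CRf n s t i = (if i = n - 1 then Some 0 else if t < ar n s i then None
      else if t < ar n s i + 2*(n-1-i) then Some (t - ar n s i) else Some (n-1-i))"
definition FRf :: "nat \<Rightarrow> nat \<Rightarrow> nat \<Rightarrow> nat \<Rightarrow> bool" where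
  "FRf n s t i = (i = n - 1 \<or> ar n s i + 2*(n-1-i) \<le> t)"
definition TRf :: "nat \<Rightarrow> nat \<Rightarrow> nat \<Rightarrow> nat \<Rightarrow> bool" where
  "TRf n s t i = (i < n - 1 \<and> s \<le> i \<and> s \<noteq> 0 \<and> ar n s i \<le> t)"
definition S0f :: "nat \<Rightarrow> nat \<Rightarrow> nat \<Rightarrow> nat \<Rightarrow> bool" where
  "S0f n s t i = (0 < i \<and> f0 n s i \<le> t)"
definition S1f :: "nat \<Rightarrow> nat \<Rightarrow> nat \<Rightarrow> nat \<Rightarrow> bool" where
  "S1f n s t i = (i < n - 1 \<and> f1 n s i \<le> t)"

definition stf :: "nat \<Rightarrow> nat \<Rightarrow> nat \<Rightarrow> nat \<Rightarrow> nat \<Rightarrow> esc_st" where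
  "stf k n s t i = \<lparr> esc_cl = CLf n s t i, esc_cr = CRf n s t i, esc_fl = FLf n s t i,
     esc_fr = FRf n s t i, esc_tl = TLf n s t i, esc_tr = TRf n s t i,
     esc_s0 = S0f n s t i, esc_s1 = S1f n s t i,
     esc_col = (if HH n s i \<le> t then Some (esc_color k i (n-1-i)) else None) \<rparr>"

definition CS :: "nat \<Rightarrow> nat \<Rightarrow> nat \<Rightarrow> nat \<Rightarrow> nat \<Rightarrow> esc_st option" where
  "CS k n s t i = (if n \<le> i \<or> t < dst s i then None else Some (stf k n s (min t (HH n s i)) i))"

definition mr0 :: "nat \<Rightarrow> nat \<Rightarrow> nat \<Rightarrow> nat \<Rightarrow> bool" where
  "mr0 n s t i = (i < n - 1 \<and> (t = s + i \<or> (t = s + i + (2*n-2) \<and> (i = 0 \<or> s = 0))))"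
definition mr1 :: "nat \<Rightarrow> nat \<Rightarrow> nat \<Rightarrow> nat \<Rightarrow> bool" where
  "mr1 n s t i = (i < n - 1 \<and> (t + s = i \<or> t + s = (2*n-2) + i \<or> (t + s = 2*(2*n-2) + i \<and> s = n - 1 \<and> i = 0)))"
definition ml0 :: "nat \<Rightarrow> nat \<Rightarrow> nat \<Rightarrow> nat \<Rightarrow> bool" where
  "ml0 n s t i = (0 < i \<and> i < n \<and> (t + i = s \<or> t + i = s + (2*n-2) \<or> (t + i = s + 2*(2*n-2) \<and> s = 0 \<and> i = n - 1)))"
definition ml1 :: "nat \<Rightarrow> nat \<Rightarrow> nat \<Rightarrow> nat \<Rightarrow> bool" where
  "ml1 n s t i = (0 < i \<and> i < n \<and> (t + s + i = 2*n-2 \<or> (t + s + i = 2*(2*n-2) \<and> (i = n - 1 \<or> s = n - 1))))"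

definition MRf :: "nat \<Rightarrow> nat \<Rightarrow> nat \<Rightarrow> nat \<Rightarrow> bool list" where
  "MRf n s t i = (if mr0 n s t i then [False] else []) @ (if mr1 n s t i then [True] else [])"
definition MLf :: "nat \<Rightarrow> nat \<Rightarrow> nat \<Rightarrow> nat \<Rightarrow> bool list" where
  "MLf n s t i = (if ml0 n s t i then [False] else []) @ (if ml1 n s t i then [True] else [])"

lemma try_halt_fields[simp]:
  "esc_cl (esc_try_halt k eL eR st) = esc_cl st"
  "esc_cr (esc_try_halt k eL eR st) = esc_cr st"
  "esc_fl (esc_try_halt k eL eR st) = esc_fl st"
  "esc_fr (esc_try_halt k eL eR st) = esc_fr st"
  "esc_tl (esc_try_halt k eL eR st) = esc_tl st"
  "esc_tr (esc_try_halt k eL eR st) = esc_tr st"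
  "esc_s0 (esc_try_halt k eL eR st) = esc_s0 st"
  "esc_s1 (esc_try_halt k eL eR st) = esc_s1 st"
  "esc_col (esc_try_halt k eL eR st) = (if esc_fl st \<and> esc_fr st \<and> (eL \<or> esc_s0 st) \<and> (eR \<or> esc_s1 st)
      then Some (esc_color k (the (esc_cl st)) (the (esc_cr st))) else esc_col st)"
  by (auto simp add: esc_try_halt_def)

lemma start_st:
  assumes "s < n"
  shows "fst (esc_start k (s=0) (s=n-1)) = stf k n s 0 s"
  apply (rule esc_st.equality)
  using assms by (auto simp add: esc_start_def esc_wake_def stf_def Let_def CLf_def al_def CRf_def ar_def
     FLf_def FRf_def TLf_def TRf_def S0f_def S1f_def f0_def f1_def HH_def dst_def)
lemma start_ok:
  assumes "s < n"
  shows "exec (esc k) n s 0 = (CS k n s 0, MLf n s 0, MRf n s 0)"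
proof -
  have b: "fst (snd (esc_start k (s=0) (s=n-1))) = MLf n s 0 s"
    using assms by (auto simp: esc_start_def MLf_def ml0_def ml1_def Let_def)
  have c: "snd (snd (esc_start k (s=0) (s=n-1))) = MRf n s 0 s"
    using assms by (auto simp: esc_start_def MRf_def mr0_def mr1_def Let_def)
  have d: "\<And>i. i \<noteq> s \<Longrightarrow> MLf n s 0 i = [] \<and> MRf n s 0 i = [] \<and> CS k n s 0 i = None"
  proof -
    fix i assume "i \<noteq> s"
    then have "\<not> ml0 n s 0 i" "\<not> ml1 n s 0 i" "\<not> mr0 n s 0 i" "\<not> mr1 n s 0 i" "0 < dst s i"
      using assms unfolding ml0_def ml1_def mr0_def mr1_def dst_def by presburger+
    then show "MLf n s 0 i = [] \<and> MRf n s 0 i = [] \<and> CS k n s 0 i = None"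
      by (simp add: MLf_def MRf_def CS_def)
  qed
  have e: "CS k n s 0 s = Some (stf k n s 0 s)" using assms by (simp add: CS_def dst_def)
  have la: "la_start (esc k) = esc_start k" by (simp add: esc_def)
  show ?thesis
    unfolding exec.simps la Let_def prod_eq_iff fst_conv snd_conv fun_eq_iff
    using start_st[OF assms, of k] b c d e by auto
qed
lemmas adefs = dst_def HH_def al_def ar_def f0_def f1_def mr0_def mr1_def ml0_def ml1_def

lemma n2:
  assumes "s < n" "i < n" "t < HH n s i"
  obtains m where "n = Suc (Suc m)"
proof -
  have "n \<noteq> 1" using assms by (auto simp: HH_def dst_def)
  then show ?thesis using assms that by (cases n; cases "n - 1"; auto)
qed

lemma msgR_int:
  assumes "s < n" "i < n" "dst s i \<le> Suc t" "t < HH n s i" "0 < i" "i < n - 1"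
  shows "mr0 n s (Suc t) i = mr0 n s t (i-1)" "mr1 n s (Suc t) i = mr1 n s t (i-1)"
        "ml0 n s (Suc t) i = ml0 n s t (i+1)" "ml1 n s (Suc t) i = ml1 n s t (i+1)"
proof -
  obtain m where m: "n = Suc (Suc m)" using n2 assms by blast
  obtain j where j: "i = Suc j" using assms by (cases i; auto)
  show "mr0 n s (Suc t) i = mr0 n s t (i-1)" using assms unfolding adefs m j by (auto split: if_splits; linarith)
  show "mr1 n s (Suc t) i = mr1 n s t (i-1)" using assms unfolding adefs m j by (auto split: if_splits; linarith)
  show "ml0 n s (Suc t) i = ml0 n s t (i+1)" using assms unfolding adefs m j by (auto split: if_splits; linarith)
  show "ml1 n s (Suc t) i = ml1 n s t (i+1)" using assms unfolding adefs m j by (auto split: if_splits; linarith)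
qed

lemma msg_0:
  assumes "s < n" "0 < n - 1" "dst s 0 \<le> Suc t" "t < HH n s 0"
  shows "mr0 n s (Suc t) 0 = ml0 n s t 1" "mr1 n s (Suc t) 0 = ml1 n s t 1"
        "\<not> ml0 n s (Suc t) 0" "\<not> ml1 n s (Suc t) 0"
proof -
  obtain m where m: "n = Suc (Suc m)" using assms by (cases n; cases "n - 1"; auto)
  show "mr0 n s (Suc t) 0 = ml0 n s t 1" using assms unfolding adefs m by (auto split: if_splits; linarith)
  show "mr1 n s (Suc t) 0 = ml1 n s t 1" using assms unfolding adefs m by (auto split: if_splits; linarith)
  show "\<not> ml0 n s (Suc t) 0" "\<not> ml1 n s (Suc t) 0" unfolding adefs by auto
qed

lemma msg_last:
  assumes "s < n" "0 < n - 1" "dst s (n-1) \<le> Suc t" "t < HH n s (n-1)"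
  shows "ml0 n s (Suc t) (n-1) = mr0 n s t (n-2)" "ml1 n s (Suc t) (n-1) = mr1 n s t (n-2)"
        "\<not> mr0 n s (Suc t) (n-1)" "\<not> mr1 n s (Suc t) (n-1)"
proof -
  obtain m where m: "n = Suc (Suc m)" using assms by (cases n; cases "n - 1"; auto)
  show "ml0 n s (Suc t) (n-1) = mr0 n s t (n-2)" using assms unfolding adefs m by (auto split: if_splits; linarith)
  show "ml1 n s (Suc t) (n-1) = mr1 n s t (n-2)" using assms unfolding adefs m by (auto split: if_splits; linarith)
  show "\<not> mr0 n s (Suc t) (n-1)" "\<not> mr1 n s (Suc t) (n-1)" unfolding adefs by auto
qed

lemma arithL:
  assumes "s < n" "i < n" "dst s i \<le> Suc t" "t < HH n s i" "0 < i"
  shows "t < al n s i \<Longrightarrow> (ml0 n s (Suc t) i \<or> ml1 n s (Suc t) i) = (Suc t = al n s i)"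
    "Suc t = al n s i \<Longrightarrow> ml0 n s (Suc t) i = (\<not> (0 < s \<and> s < i))"
    "al n s i \<le> t \<Longrightarrow> t < al n s i + 2*i \<Longrightarrow>
       (if 0 < s \<and> s < i then mr1 n s t (i-1) else mr0 n s t (i-1)) = (Suc t = al n s i + 2*i)"
    "(f0 n s i \<le> Suc t) = (f0 n s i \<le> t \<or> ml0 n s (Suc t) i)"
proof -
  obtain m where m: "n = Suc (Suc m)" using n2 assms by blast
  obtain j where j: "i = Suc j" using assms by (cases i; auto)
  show "t < al n s i \<Longrightarrow> (ml0 n s (Suc t) i \<or> ml1 n s (Suc t) i) = (Suc t = al n s i)"
    using assms unfolding adefs m j by (auto split: if_splits; linarith)
  show "Suc t = al n s i \<Longrightarrow> ml0 n s (Suc t) i = (\<not> (0 < s \<and> s < i))"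
    using assms unfolding adefs m j by (auto split: if_splits; linarith)
  show "al n s i \<le> t \<Longrightarrow> t < al n s i + 2*i \<Longrightarrow>
       (if 0 < s \<and> s < i then mr1 n s t (i-1) else mr0 n s t (i-1)) = (Suc t = al n s i + 2*i)"
    using assms unfolding adefs m j by (auto split: if_splits; linarith)
  show "(f0 n s i \<le> Suc t) = (f0 n s i \<le> t \<or> ml0 n s (Suc t) i)"
    using assms unfolding adefs m j by (auto split: if_splits; linarith)
qed

lemma arithR:
  assumes "s < n" "i < n" "dst s i \<le> Suc t" "t < HH n s i" "i < n - 1"
  shows "t < ar n s i \<Longrightarrow> (mr0 n s (Suc t) i \<or> mr1 n s (Suc t) i) = (Suc t = ar n s i)"
    "Suc t = ar n s i \<Longrightarrow> mr0 n s (Suc t) i = (\<not> (s \<le> i \<and> s \<noteq> 0))"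
    "ar n s i \<le> t \<Longrightarrow> t < ar n s i + 2*(n-1-i) \<Longrightarrow>
       (if s \<le> i \<and> s \<noteq> 0 then ml1 n s t (i+1) else ml0 n s t (i+1)) = (Suc t = ar n s i + 2*(n-1-i))"
    "(f1 n s i \<le> Suc t) = (f1 n s i \<le> t \<or> mr1 n s (Suc t) i)"
proof -
  obtain m where m: "n = Suc (Suc m)" using n2 assms by blast
  show "t < ar n s i \<Longrightarrow> (mr0 n s (Suc t) i \<or> mr1 n s (Suc t) i) = (Suc t = ar n s i)"
    using assms unfolding adefs m by (auto split: if_splits; linarith)
  show "Suc t = ar n s i \<Longrightarrow> mr0 n s (Suc t) i = (\<not> (s \<le> i \<and> s \<noteq> 0))"
    using assms unfolding adefs m by (auto split: if_splits; linarith)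
  show "ar n s i \<le> t \<Longrightarrow> t < ar n s i + 2*(n-1-i) \<Longrightarrow>
       (if s \<le> i \<and> s \<noteq> 0 then ml1 n s t (i+1) else ml0 n s t (i+1)) = (Suc t = ar n s i + 2*(n-1-i))"
    using assms unfolding adefs m by (auto split: if_splits; linarith)
  show "(f1 n s i \<le> Suc t) = (f1 n s i \<le> t \<or> mr1 n s (Suc t) i)"
    using assms unfolding adefs m by (auto split: if_splits; linarith)
qed

lemma arithH:
  assumes "s < n" "i < n" "dst s i \<le> Suc t" "t < HH n s i"
  shows "(FLf n s (Suc t) i \<and> FRf n s (Suc t) i \<and> (i = 0 \<or> S0f n s (Suc t) i) \<and> (i = n - 1 \<or> S1f n s (Suc t) i))
     = (HH n s i \<le> Suc t)"
proof -
  obtain m where m: "n = Suc (Suc m)" using n2 assms by blast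
  show ?thesis using assms unfolding adefs FLf_def FRf_def S0f_def S1f_def m by (auto split: if_splits; linarith)
qed

lemma set_MRf: "b \<in> set (MRf n s t i) \<longleftrightarrow> (if b then mr1 n s t i else mr0 n s t i)"
  by (cases b) (auto simp: MRf_def)
lemma set_MLf: "b \<in> set (MLf n s t i) \<longleftrightarrow> (if b then ml1 n s t i else ml0 n s t i)"
  by (cases b) (auto simp: MLf_def)
lemma MRf_ne: "MRf n s t i \<noteq> [] \<longleftrightarrow> mr0 n s t i \<or> mr1 n s t i" by (auto simp: MRf_def)
lemma MLf_ne: "MLf n s t i \<noteq> [] \<longleftrightarrow> ml0 n s t i \<or> ml1 n s t i" by (auto simp: MLf_def)
lemma hd_MRf: "mr0 n s t i \<or> mr1 n s t i \<Longrightarrow> hd (MRf n s t i) = (\<not> mr0 n s t i)" by (auto simp: MRf_def)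
lemma hd_MLf: "ml0 n s t i \<or> ml1 n s t i \<Longrightarrow> hd (MLf n s t i) = (\<not> ml0 n s t i)" by (auto simp: MLf_def)

lemma updL:
  assumes "s < n" "i < n" "dst s i \<le> Suc t" "t < HH n s i"
  shows "esc_upd (CLf n s t i, FLf n s t i, TLf n s t i) (if 0 < i then MRf n s t (i-1) else []) (MLf n s (Suc t) i)
     = (CLf n s (Suc t) i, FLf n s (Suc t) i, TLf n s (Suc t) i)"
proof (cases "i = 0")
  case True
  then show ?thesis by (simp add: esc_upd_def CLf_def FLf_def TLf_def)
next
  case False
  then have i0: "0 < i" by simp
  note A = arithL[OF assms i0]
  consider (fin) "al n s i + 2*i \<le> t" | (none) "t < al n s i" | (cnt) "al n s i \<le> t" "t < al n s i + 2*i" by linarith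
  then show ?thesis
  proof cases
    case fin
    then show ?thesis using i0 by (simp add: esc_upd_def CLf_def FLf_def TLf_def)
  next
    case none
    show ?thesis
    proof (cases "Suc t = al n s i")
      case True
      then show ?thesis using none i0 A(1)[OF none] A(2)[OF True]
        by (simp add: esc_upd_def CLf_def FLf_def TLf_def MLf_ne hd_MLf)
    next
      case F: False
      then show ?thesis using none i0 A(1)[OF none]
        by (simp add: esc_upd_def CLf_def FLf_def TLf_def MLf_ne)
    qed
  next
    case cnt
    have key: "(TLf n s t i \<in> set (MRf n s t (i-1))) = (Suc t = al n s i + 2*i)"
      using A(3)[OF cnt] cnt unfolding TLf_def set_MRf by (cases "0 < s \<and> s < i") auto
    show ?thesis
    proof (cases "Suc t = al n s i + 2*i")
      case True
      have "(t - al n s i + 1) div 2 = i" using True cnt by simp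
      then show ?thesis using key True cnt i0
        by (simp add: esc_upd_def CLf_def FLf_def TLf_def)
    next
      case F: False
      then show ?thesis using key cnt i0
        by (simp add: esc_upd_def CLf_def FLf_def TLf_def)
    qed
  qed
qed

lemma updR:
  assumes "s < n" "i < n" "dst s i \<le> Suc t" "t < HH n s i"
  shows "esc_upd (CRf n s t i, FRf n s t i, TRf n s t i) (if i + 1 < n then MLf n s t (i+1) else []) (MRf n s (Suc t) i)
     = (CRf n s (Suc t) i, FRf n s (Suc t) i, TRf n s (Suc t) i)"
proof (cases "i = n - 1")
  case True
  then show ?thesis by (simp add: esc_upd_def CRf_def FRf_def TRf_def)
next
  case False
  then have i0: "i < n - 1" using assms by simp
  then have i1: "i + 1 < n" by simp
  note A = arithR[OF assms i0]
  consider (fin) "ar n s i + 2*(n-1-i) \<le> t" | (none) "t < ar n s i" | (cnt) "ar n s i \<le> t" "t < ar n s i + 2*(n-1-i)" by linarith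
  then show ?thesis
  proof cases
    case fin
    then show ?thesis using i0 by (simp add: esc_upd_def CRf_def FRf_def TRf_def)
  next
    case none
    show ?thesis
    proof (cases "Suc t = ar n s i")
      case True
      then show ?thesis using none i0 A(1)[OF none] A(2)[OF True]
        by (simp add: esc_upd_def CRf_def FRf_def TRf_def MRf_ne hd_MRf)
    next
      case F: False
      then show ?thesis using none i0 A(1)[OF none]
        by (simp add: esc_upd_def CRf_def FRf_def TRf_def MRf_ne)
    qed
  next
    case cnt
    have key: "(TRf n s t i \<in> set (MLf n s t (i+1))) = (Suc t = ar n s i + 2*(n-1-i))"
      using A(3)[OF cnt] cnt i0 unfolding TRf_def set_MLf by (cases "s \<le> i \<and> s \<noteq> 0") auto
    show ?thesis
    proof (cases "Suc t = ar n s i + 2*(n-1-i)")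
      case True
      have "(t - ar n s i + 1) div 2 = n - 1 - i" using True cnt by simp
      then show ?thesis using key True cnt i0 i1
        by (simp add: esc_upd_def CRf_def FRf_def TRf_def)
    next
      case F: False
      then show ?thesis using key cnt i0 i1
        by (simp add: esc_upd_def CRf_def FRf_def TRf_def)
    qed
  qed
qed

lemma msgsR:
  assumes "s < n" "i < n" "dst s i \<le> Suc t" "t < HH n s i"
  shows "(if i = n - 1 then [] else if i = 0 then (if i + 1 < n then MLf n s t (i+1) else [])
           else (if 0 < i then MRf n s t (i-1) else [])) = MRf n s (Suc t) i"
proof -
  obtain m where m: "n = Suc (Suc m)" using n2 assms by blast
  have n1: "0 < n - 1" using m by simp
  consider (z) "i = 0" | (l) "i = n - 1" | (int) "0 < i" "i < n - 1" using assms by linarith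
  then show ?thesis
  proof cases
    case z
    note M = msg_0[OF assms(1) n1, of t]
    show ?thesis using M z assms m by (simp add: MRf_def MLf_def)
  next
    case l
    note M = msg_last[OF assms(1) n1, of t]
    show ?thesis using M l assms m by (simp add: MRf_def MLf_def)
  next
    case int
    note M = msgR_int[OF assms int]
    show ?thesis using M int by (simp add: MRf_def MLf_def)
  qed
qed

lemma msgsL:
  assumes "s < n" "i < n" "dst s i \<le> Suc t" "t < HH n s i"
  shows "(if i = 0 then [] else if i = n - 1 then (if 0 < i then MRf n s t (i-1) else [])
           else (if i + 1 < n then MLf n s t (i+1) else [])) = MLf n s (Suc t) i"
proof -
  obtain m where m: "n = Suc (Suc m)" using n2 assms by blast
  have n1: "0 < n - 1" using m by simp
  consider (z) "i = 0" | (l) "i = n - 1" | (int) "0 < i" "i < n - 1" using assms by linarith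
  then show ?thesis
  proof cases
    case z
    note M = msg_0[OF assms(1) n1, of t]
    show ?thesis using M z assms m by (simp add: MRf_def MLf_def)
  next
    case l
    note M = msg_last[OF assms(1) n1, of t]
    have e: "i - 1 = n - 2" using l by simp
    show ?thesis using M l assms m e by (simp add: MRf_def MLf_def)
  next
    case int
    note M = msgR_int[OF assms int]
    have "i + 1 < n" using int by simp
    then show ?thesis using M int by (simp add: MRf_def MLf_def)
  qed
qed

lemma sflags:
  assumes "s < n" "i < n" "dst s i \<le> Suc t" "t < HH n s i"
  shows "S0f n s (Suc t) i = (S0f n s t i \<or> False \<in> set (MLf n s (Suc t) i))"
        "S1f n s (Suc t) i = (S1f n s t i \<or> True \<in> set (MRf n s (Suc t) i))"
proof -
  show "S0f n s (Suc t) i = (S0f n s t i \<or> False \<in> set (MLf n s (Suc t) i))"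
  proof (cases "i = 0")
    case True then show ?thesis by (simp add: S0f_def set_MLf ml0_def)
  next
    case False then show ?thesis using arithL(4)[OF assms] by (simp add: S0f_def set_MLf)
  qed
  show "S1f n s (Suc t) i = (S1f n s t i \<or> True \<in> set (MRf n s (Suc t) i))"
  proof (cases "i < n - 1")
    case False then show ?thesis by (simp add: S1f_def set_MRf mr1_def)
  next
    case True then show ?thesis using arithR(4)[OF assms] by (simp add: S1f_def set_MRf)
  qed
qed

lemma halt_fix:
  assumes "s < n" "i < n" "dst s i \<le> Suc t" "t < HH n s i"
  shows "esc_try_halt k (i = 0) (i = n - 1) ((stf k n s (Suc t) i)\<lparr>esc_col := None\<rparr>) = stf k n s (Suc t) i"
proof -
  note H = arithH[OF assms]
  show ?thesis
  proof (cases "HH n s i \<le> Suc t")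
    case True
    then have fl: "FLf n s (Suc t) i" and fr: "FRf n s (Suc t) i" using H by auto
    have "CLf n s (Suc t) i = Some i" using fl by (auto simp: CLf_def FLf_def)
    moreover have "CRf n s (Suc t) i = Some (n-1-i)" using fr by (auto simp: CRf_def FRf_def)
    ultimately show ?thesis using True H by (simp add: esc_try_halt_def stf_def)
  next
    case False
    then show ?thesis using H by (simp add: esc_try_halt_def stf_def)
  qed
qed

lemma core:
  assumes "s < n" "i < n" "dst s i \<le> Suc t" "t < HH n s i"
  shows "esc_step k (i=0) (i=n-1) (stf k n s t i) (if 0<i then MRf n s t (i-1) else [])
           (if i+1<n then MLf n s t (i+1) else []) = (stf k n s (Suc t) i, MLf n s (Suc t) i, MRf n s (Suc t) i)"
proof -
  have f: "esc_cl (stf k n s t i) = CLf n s t i" "esc_fl (stf k n s t i) = FLf n s t i"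
     "esc_tl (stf k n s t i) = TLf n s t i" "esc_cr (stf k n s t i) = CRf n s t i"
     "esc_fr (stf k n s t i) = FRf n s t i" "esc_tr (stf k n s t i) = TRf n s t i"
     "esc_s0 (stf k n s t i) = S0f n s t i" "esc_s1 (stf k n s t i) = S1f n s t i"
    by (simp_all add: stf_def)
  have col: "esc_col (stf k n s t i) = None" using assms(4) by (simp add: stf_def)
  have r: "(stf k n s t i)\<lparr>esc_cl := CLf n s (Suc t) i, esc_fl := FLf n s (Suc t) i, esc_tl := TLf n s (Suc t) i,
      esc_cr := CRf n s (Suc t) i, esc_fr := FRf n s (Suc t) i, esc_tr := TRf n s (Suc t) i,
      esc_s0 := S0f n s (Suc t) i, esc_s1 := S1f n s (Suc t) i\<rparr> = (stf k n s (Suc t) i)\<lparr>esc_col := None\<rparr>"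
    using col by (simp add: stf_def)
  show ?thesis
    unfolding esc_step_def Let_def msgsR[OF assms] msgsL[OF assms] f updL[OF assms] updR[OF assms]
      fst_conv snd_conv sflags(1,2)[OF assms, symmetric] r halt_fix[OF assms] ..
qed

lemma early:
  assumes "s < n" "i < n" "Suc t < dst s i"
  shows "0 < i \<Longrightarrow> \<not> mr0 n s t (i-1) \<and> \<not> mr1 n s t (i-1)"
    "i + 1 < n \<Longrightarrow> \<not> ml0 n s t (i+1) \<and> \<not> ml1 n s t (i+1)"
    "\<not> ml0 n s (Suc t) i" "\<not> ml1 n s (Suc t) i" "\<not> mr0 n s (Suc t) i" "\<not> mr1 n s (Suc t) i"
proof -
  obtain m where m: "n = Suc m" using assms by (cases n) auto
  show "0 < i \<Longrightarrow> \<not> mr0 n s t (i-1) \<and> \<not> mr1 n s t (i-1)"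
  proof -
    assume "0 < i"
    then obtain j where j: "i = Suc j" by (cases i) auto
    show ?thesis using assms unfolding adefs m j by (auto split: if_splits)
  qed
  show "i + 1 < n \<Longrightarrow> \<not> ml0 n s t (i+1) \<and> \<not> ml1 n s t (i+1)"
    using assms unfolding adefs m by (auto split: if_splits)
  show "\<not> ml0 n s (Suc t) i" "\<not> ml1 n s (Suc t) i" "\<not> mr0 n s (Suc t) i" "\<not> mr1 n s (Suc t) i"
    using assms unfolding adefs m by (auto split: if_splits)
qed

lemma late:
  assumes "s < n" "i < n" "HH n s i < t"
  shows "\<not> ml0 n s t i" "\<not> ml1 n s t i" "\<not> mr0 n s t i" "\<not> mr1 n s t i"
proof -
  obtain m where m: "n = Suc m" using assms by (cases n) auto
  show "\<not> ml0 n s t i" "\<not> ml1 n s t i" "\<not> mr0 n s t i" "\<not> mr1 n s t i"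
    using assms unfolding adefs m by (auto split: if_splits)
qed

lemma wake_msg:
  assumes "s < n" "i < n" "i \<noteq> s" "Suc t = dst s i"
  shows "(0 < i \<and> (mr0 n s t (i-1) \<or> mr1 n s t (i-1))) \<or> (i + 1 < n \<and> (ml0 n s t (i+1) \<or> ml1 n s t (i+1)))"
proof (cases "i < s")
  case True
  then have "t + (i+1) = s" "i + 1 < n" using assms by (auto simp: dst_def)
  then have "ml0 n s t (i+1)" unfolding ml0_def by simp
  then show ?thesis using \<open>i+1<n\<close> by blast
next
  case False
  then have "t + s = i - 1" "0 < i" "i - 1 < n - 1" using assms by (auto simp: dst_def)
  then have "mr1 n s t (i-1)" unfolding mr1_def by simp
  then show ?thesis using \<open>0<i\<close> by blast
qed

lemma wake_st:
  assumes "s < n" "i < n" "i \<noteq> s" "Suc t = dst s i"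
  shows "esc_wake (i = 0) (i = n - 1) = stf k n s t i"
proof -
  obtain m where m: "n = Suc m" using assms by (cases n) auto
  have a: "t < al n s i" "t < ar n s i" "t < f0 n s i" "t < f1 n s i" "t < HH n s i"
    using assms unfolding adefs m by (auto split: if_splits)
  show ?thesis unfolding esc_wake_def stf_def CLf_def CRf_def FLf_def FRf_def TLf_def TRf_def S0f_def S1f_def
    using a by auto
qed

lemma round_ok:
  assumes "s < n"
  shows "agent_round (esc k) n i (CS k n s t i) (if 0 < i then MRf n s t (i-1) else [])
           (if i + 1 < n then MLf n s t (i+1) else []) = (CS k n s (Suc t) i, MLf n s (Suc t) i, MRf n s (Suc t) i)"
proof -
  have E: "la_step (esc k) = esc_step k" "la_wake (esc k) = esc_wake" "la_out (esc k) = esc_col"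
    by (simp_all add: esc_def)
  consider (out) "n \<le> i" | (erl) "i < n" "Suc t < dst s i" | (wk) "i < n" "Suc t = dst s i" "i \<noteq> s"
    | (run) "i < n" "dst s i \<le> t" "t < HH n s i" | (fin) "i < n" "HH n s i \<le> t"
    by (cases "n \<le> i"; cases "i = s"; auto simp: dst_def HH_def split: if_splits; linarith)
  then show ?thesis
  proof cases
    case out
    then have "\<not> i < n - 1" "\<not> i < n" by auto
    then show ?thesis by (simp add: agent_round_def CS_def MLf_def MRf_def ml0_def ml1_def mr0_def mr1_def)
  next
    case erl
    note e = early(1-6)[OF assms erl]
    have "(if 0 < i then MRf n s t (i-1) else []) = []" "(if i + 1 < n then MLf n s t (i+1) else []) = []"
      using e by (auto simp: MRf_def MLf_def)
    moreover have "MLf n s (Suc t) i = []" "MRf n s (Suc t) i = []" using e by (auto simp: MRf_def MLf_def)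
    moreover have "CS k n s t i = None" "CS k n s (Suc t) i = None" using erl by (auto simp: CS_def)
    ultimately show ?thesis by (simp add: agent_round_def)
  next
    case wk
    have h: "dst s i \<le> Suc t" "t < HH n s i" using wk by (auto simp: HH_def)
    have ne: "\<not> ((if 0 < i then MRf n s t (i-1) else []) = [] \<and> (if i + 1 < n then MLf n s t (i+1) else []) = [])"
      using wake_msg[OF assms wk(1,3,2)] by (cases "i = 0"; simp add: MRf_def MLf_def; blast)
    have c1: "CS k n s t i = None" using wk by (simp add: CS_def)
    have c2: "CS k n s (Suc t) i = Some (stf k n s (Suc t) i)" using wk h by (simp add: CS_def)
    show ?thesis using ne c1 c2 wake_st[OF assms wk(1,3,2), of k] core[OF assms wk(1) h, of k] wk(1)
      by (simp add: agent_round_def E)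
  next
    case run
    have h: "dst s i \<le> Suc t" "t < HH n s i" using run by auto
    have c1: "CS k n s t i = Some (stf k n s t i)" using run by (simp add: CS_def)
    have c2: "CS k n s (Suc t) i = Some (stf k n s (Suc t) i)" using run by (simp add: CS_def)
    have c3: "esc_col (stf k n s t i) = None" using run by (simp add: stf_def)
    show ?thesis using c1 c2 c3 core[OF assms run(1) h, of k] run(1)
      by (simp add: agent_round_def E)
  next
    case fin
    have c1: "CS k n s t i = Some (stf k n s (HH n s i) i)" using fin by (simp add: CS_def HH_def)
    have c2: "CS k n s (Suc t) i = Some (stf k n s (HH n s i) i)" using fin by (simp add: CS_def HH_def)
    have c3: "esc_col (stf k n s (HH n s i) i) \<noteq> None" by (simp add: stf_def)
    have l: "HH n s i < Suc t" using fin by simp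
    note L = late[OF assms fin(1) l]
    have "MLf n s (Suc t) i = []" "MRf n s (Suc t) i = []" using L by (auto simp: MLf_def MRf_def)
    then show ?thesis using c1 c2 c3 fin(1) by (simp add: agent_round_def E)
  qed
qed

lemma exec_ok:
  assumes "s < n"
  shows "exec (esc k) n s t = (CS k n s t, MLf n s t, MRf n s t)"
proof (induction t)
  case 0
  then show ?case using start_ok[OF assms] by simp
next
  case (Suc t)
  show ?case
    unfolding exec.simps Suc Let_def prod.case
    using round_ok[OF assms, of k _ t] by (simp add: fun_eq_iff)
qed
lemma cnt_lt:
  assumes "0 < (k::nat)"
  shows "{i. i < n \<and> i*k < m} = {..< min n ((m+k-1) div k)}"
proof -
  have "i*k < m \<longleftrightarrow> i < (m + k - 1) div k" for i
  proof -
    have "i < (m + k - 1) div k \<longleftrightarrow> Suc i \<le> (m + k - 1) div k" by (rule Suc_le_eq[symmetric])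
    also have "\<dots> \<longleftrightarrow> Suc i * k \<le> m + k - 1" by (rule less_eq_div_iff_mult_less_eq[OF assms])
    also have "\<dots> \<longleftrightarrow> i*k < m" using assms by (simp only: mult_Suc) arith
    finally show ?thesis by (rule sym)
  qed
  then show ?thesis by (auto simp: lessThan_def)
qed

lemma cnt_lt_card:
  assumes "0 < (k::nat)" "a \<le> k"
  shows "card {i. i < n \<and> i*k < a*n} = (a*n+k-1) div k"
proof -
  have "a*n \<le> k*n" using assms by simp
  then have "a*n + k - 1 < (n+1)*k" using assms by (simp add: algebra_simps; linarith)
  then have "(a*n+k-1) div k < n + 1" using assms
    by (simp add: div_less_iff_less_mult)
  then have "(a*n+k-1) div k \<le> n" by simp
  then show ?thesis using cnt_lt[OF assms(1)] by simp
qed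

lemma class_card:
  assumes "0 < (k::nat)" "0 < n" "1 \<le> a" "a \<le> k"
  shows "card {i. i < n \<and> i*k div n + 1 = a} = ((a-1)*n + k - 1 + n) div k - ((a-1)*n + k - 1) div k"
proof -
  have "{i. i < n \<and> i*k div n + 1 = a} = {i. i < n \<and> i*k < a*n} - {i. i < n \<and> i*k < (a-1)*n}"
  proof -
    have "i*k div n + 1 = a \<longleftrightarrow> i*k < a*n \<and> \<not> i*k < (a-1)*n" for i
    proof -
      have "i*k div n < a \<longleftrightarrow> i*k < a*n" using assms(2) by (simp add: div_less_iff_less_mult)
      moreover have "a - 1 \<le> i*k div n \<longleftrightarrow> (a-1)*n \<le> i*k" using assms(2) less_eq_div_iff_mult_less_eq by blast
      moreover have "i*k div n + 1 = a \<longleftrightarrow> i*k div n < a \<and> a - 1 \<le> i*k div n" using assms(3) by linarith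
      ultimately show ?thesis by (metis not_le)
    qed
    then show ?thesis by auto
  qed
  moreover have "{i. i < n \<and> i*k < (a-1)*n} \<subseteq> {i. i < n \<and> i*k < a*n}"
    using assms by auto (meson diff_le_self order.strict_trans2 mult_le_mono1)
  ultimately have "card {i. i < n \<and> i*k div n + 1 = a} = card {i. i < n \<and> i*k < a*n} - card {i. i < n \<and> i*k < (a-1)*n}"
    by (simp add: card_Diff_subset)
  also have "\<dots> = (a*n + k - 1) div k - ((a-1)*n + k - 1) div k"
    using cnt_lt_card[OF assms(1), of a n] cnt_lt_card[OF assms(1), of "a-1" n] assms by simp
  also have "a*n + k - 1 = (a-1)*n + k - 1 + n" using assms by (cases a) auto
  finally show ?thesis .
qed

lemma div_step:
  assumes "0 < (k::nat)"
  shows "n div k \<le> (x + n) div k - x div k" "(x + n) div k - x div k \<le> n div k + 1"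
proof -
  have e: "(x + n) div k = x div k + n div k + (x mod k + n mod k) div k" by (rule div_add1_eq)
  have "x mod k + n mod k < 2 * k" using mod_less_divisor[OF assms, of x] mod_less_divisor[OF assms, of n] by linarith
  then have "(x mod k + n mod k) div k < 2" using assms by (simp add: div_less_iff_less_mult mult.commute)
  then have "(x mod k + n mod k) div k \<le> 1" by linarith
  then show "n div k \<le> (x + n) div k - x div k" "(x + n) div k - x div k \<le> n div k + 1" using e by auto
qed

lemma ribbon_color:
  assumes "0 < (k::nat)" "0 < n"
  shows "is_ribbon n k (\<lambda>i. i*k div n + 1)"
  unfolding is_ribbon_def
proof (intro conjI allI impI)
  fix i assume "i < n"
  then have "i*k < k*n" using assms by simp
  then have "i*k div n < k" by (simp add: div_less_iff_less_mult assms)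
  then show "1 \<le> i * k div n + 1" "i * k div n + 1 \<le> k" by auto
next
  fix i j :: nat assume "i \<le> j" "j < n"
  then show "i * k div n + 1 \<le> j * k div n + 1" by (simp add: div_le_mono)
next
  fix i j m :: nat assume h: "i \<le> m" "m \<le> j" "j < n" "i * k div n + 1 = j * k div n + 1"
  have "i * k div n \<le> m * k div n" "m * k div n \<le> j * k div n" using h(1,2) by (simp_all add: div_le_mono)
  then show "m * k div n + 1 = i * k div n + 1" using h by linarith
next
  fix a b :: nat assume h: "1 \<le> a" "a \<le> k" "1 \<le> b" "b \<le> k"
  show "card {i. i < n \<and> i * k div n + 1 = a} \<le> card {i. i < n \<and> i * k div n + 1 = b} + 1"
    using class_card[OF assms h(1,2)] class_card[OF assms h(3,4)]
      div_step[OF assms(1), where n=n and x="(a-1)*n + k - 1"] div_step[OF assms(1), where n=n and x="(b-1)*n + k - 1"]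
    by linarith
qed

declare bitlen.simps[simp del]

lemma bitlen_ge1: "1 \<le> bitlen m" by (subst bitlen.simps) auto

lemma bitlen_pow: "1 \<le> m \<Longrightarrow> 2 ^ (bitlen m - 1) \<le> m"
proof (induction m rule: bitlen.induct)
  case (1 m)
  show ?case
  proof (cases "m < 2")
    case True
    then show ?thesis using 1(2) by (subst bitlen.simps) simp
  next
    case False
    then have b: "bitlen m = Suc (bitlen (m div 2))" by (subst bitlen.simps) simp
    have "1 \<le> m div 2" using False by simp
    then have ih: "2 ^ (bitlen (m div 2) - 1) \<le> m div 2" using 1(1) False by blast
    have "2 ^ (bitlen m - 1) = 2 * 2 ^ (bitlen (m div 2) - 1)"
      using b bitlen_ge1[of "m div 2"] by (simp add: power_Suc[symmetric] del: power_Suc)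
    also have "\<dots> \<le> 2 * (m div 2)" using ih by simp
    also have "\<dots> \<le> m" by simp
    finally show ?thesis .
  qed
qed

lemma bitlen_log:
  assumes "m \<le> M" "1 \<le> M"
  shows "real (bitlen m) \<le> 1 + log 2 (real M)"
proof (cases "m = 0")
  case True
  have "0 \<le> log 2 (real M)" using assms by simp
  moreover have "bitlen 0 = 1" by (subst bitlen.simps) simp
  ultimately show ?thesis using True by simp
next
  case False
  have "(2::real) ^ (bitlen m - 1) \<le> real m" using bitlen_pow[of m] False
    by (metis One_nat_def Suc_leI neq0_conv numeral_power_le_of_nat_cancel_iff)
  also have "\<dots> \<le> real M" using assms by simp
  finally have "(2::real) powr real (bitlen m - 1) \<le> real M" by (simp add: powr_realpow)
  then have "real (bitlen m - 1) \<le> log 2 (real M)" using assms by (simp add: le_log_iff)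
  then show ?thesis using bitlen_ge1[of m] by simp
qed

lemma obits_log:
  assumes "\<And>m. x = Some m \<Longrightarrow> m \<le> M" "1 \<le> M"
  shows "real (obits x) \<le> 2 + log 2 (real M)"
proof (cases x)
  case None
  have "0 \<le> log 2 (real M)" using assms by simp
  then show ?thesis using None by (simp add: obits_def)
next
  case (Some m)
  then show ?thesis using bitlen_log[OF assms(1)[OF Some] assms(2)] by (simp add: obits_def)
qed

lemma sum_le1:
  fixes n :: nat
  assumes "\<And>i j. i < n \<Longrightarrow> j < n \<Longrightarrow> P i \<Longrightarrow> P j \<Longrightarrow> i = j"
    "\<And>i j. i < n \<Longrightarrow> j < n \<Longrightarrow> Q i \<Longrightarrow> Q j \<Longrightarrow> i = j"
    "\<And>i j. i < n \<Longrightarrow> j < n \<Longrightarrow> P i \<Longrightarrow> Q j \<Longrightarrow> False"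
  shows "(\<Sum>i<n. (if P i then 1 else 0) + (if Q i then 1 else 0)) \<le> (1::nat)"
proof -
  have e: "(\<Sum>i<n. (if P i then 1 else 0) + (if Q i then 1 else 0)) = card {i. i < n \<and> P i} + card {i. i < n \<and> Q i}"
  proof -
    have a: "{i. i<n \<and> P i} = {..<n} \<inter> {i. P i}" "{i. i<n \<and> Q i} = {..<n} \<inter> {i. Q i}" by auto
    have b: "card ({..<n} \<inter> Collect R) = (\<Sum>i<n. (if R i then 1 else 0::nat))" for R
    proof -
      have "card ({..<n} \<inter> Collect R) = (\<Sum>i\<in>{..<n} \<inter> Collect R. (1::nat))" by (rule card_eq_sum)
      also have "\<dots> = (\<Sum>i<n. (if R i then 1 else 0::nat))" by (subst sum.inter_restrict) simp_all
      finally show ?thesis .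
    qed
    show ?thesis unfolding sum.distrib a b ..
  qed
  have c1: "card {i. i < n \<and> P i} \<le> 1" using assms(1) by (auto simp: card_le_Suc0_iff_eq)
  have c2: "card {i. i < n \<and> Q i} \<le> 1" using assms(2) by (auto simp: card_le_Suc0_iff_eq)
  show ?thesis
  proof (cases "\<exists>i<n. P i")
    case True
    then have "{i. i < n \<and> Q i} = {}" using assms(3) by blast
    then have "card {i. i < n \<and> Q i} = 0" by (simp only: card.empty)
    then show ?thesis using e c1 by linarith
  next
    case False
    then have "{i. i < n \<and> P i} = {}" by blast
    then have "card {i. i < n \<and> P i} = 0" by (simp only: card.empty)
    then show ?thesis using e c2 by linarith
  qed
qed

lemma ribbon_cong:
  assumes "\<And>i. i < n \<Longrightarrow> f i = g i" "is_ribbon n k g"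
  shows "is_ribbon n k f"
proof -
  have c: "{i. i < n \<and> f i = a} = {i. i < n \<and> g i = a}" for a using assms(1) by auto
  have R: "\<forall>i<n. 1 \<le> g i \<and> g i \<le> k" "\<forall>i j. i \<le> j \<longrightarrow> j < n \<longrightarrow> g i \<le> g j"
     "\<forall>i j m. i \<le> m \<longrightarrow> m \<le> j \<longrightarrow> j < n \<longrightarrow> g i = g j \<longrightarrow> g m = g i"
     "\<forall>a b. 1 \<le> a \<longrightarrow> a \<le> k \<longrightarrow> 1 \<le> b \<longrightarrow> b \<le> k \<longrightarrow>
        card {i. i < n \<and> g i = a} \<le> card {i. i < n \<and> g i = b} + 1"
    using assms(2) unfolding is_ribbon_def by blast+
  show ?thesis unfolding is_ribbon_def c
  proof (intro conjI allI impI)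
    fix i assume "i < n" then show "1 \<le> f i" "f i \<le> k" using R(1) assms(1) by auto
  next
    fix i j :: nat assume "i \<le> j" "j < n" then show "f i \<le> f j" using R(2) assms(1) by simp
  next
    fix i j m :: nat assume h: "i \<le> m" "m \<le> j" "j < n" "f i = f j"
    then have "i < n" "m < n" by auto
    then show "f m = f i" using h R(3) assms(1) by metis
  next
    fix a b :: nat assume "1 \<le> a" "a \<le> k" "1 \<le> b" "b \<le> k"
    then show "card {i. i < n \<and> g i = a} \<le> card {i. i < n \<and> g i = b} + 1" using R(4) by blast
  qed
qed

lemma uniq_aux:
  assumes "s < n" "i < n" "j < n" "P" "P \<Longrightarrow> n \<noteq> 0 \<and> n \<noteq> 1"
    "\<And>m. n = Suc (Suc m) \<Longrightarrow> Q"
  shows "Q"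
proof -
  obtain m where "n = Suc (Suc m)" using assms(4,5) by (cases n; cases "n - 1"; auto)
  then show ?thesis using assms(6) by blast
qed

lemma uniq:
  assumes "s < n" "i < n" "j < n"
  shows "ml1 n s t i \<Longrightarrow> ml1 n s t j \<Longrightarrow> i = j" "mr1 n s t i \<Longrightarrow> mr1 n s t j \<Longrightarrow> i = j"
    "ml1 n s t i \<Longrightarrow> mr1 n s t j \<Longrightarrow> False"
    "ml0 n s t i \<Longrightarrow> ml0 n s t j \<Longrightarrow> i = j" "mr0 n s t i \<Longrightarrow> mr0 n s t j \<Longrightarrow> i = j"
    "ml0 n s t i \<Longrightarrow> mr0 n s t j \<Longrightarrow> False"
proof -
  assume a: "ml1 n s t i" "ml1 n s t j"
  then obtain m where m: "n = Suc (Suc m)" unfolding ml1_def by (cases n; cases "n - 1"; auto)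
  show "i = j" using a assms unfolding ml1_def m by auto
next
  assume a: "mr1 n s t i" "mr1 n s t j"
  then obtain m where m: "n = Suc (Suc m)" unfolding mr1_def by (cases n; cases "n - 1"; auto)
  show "i = j" using a assms unfolding mr1_def m by auto
next
  assume a: "ml1 n s t i" "mr1 n s t j"
  then obtain m where m: "n = Suc (Suc m)" unfolding ml1_def by (cases n; cases "n - 1"; auto)
  show False using a assms unfolding ml1_def mr1_def m by auto
next
  assume a: "ml0 n s t i" "ml0 n s t j"
  then obtain m where m: "n = Suc (Suc m)" unfolding ml0_def by (cases n; cases "n - 1"; auto)
  show "i = j" using a assms unfolding ml0_def m by auto
next
  assume a: "mr0 n s t i" "mr0 n s t j"
  then obtain m where m: "n = Suc (Suc m)" unfolding mr0_def by (cases n; cases "n - 1"; auto)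
  show "i = j" using a assms unfolding mr0_def m by auto
next
  assume a: "ml0 n s t i" "mr0 n s t j"
  then obtain m where m: "n = Suc (Suc m)" unfolding ml0_def by (cases n; cases "n - 1"; auto)
  show False using a assms unfolding ml0_def mr0_def m by auto
qed

lemma gsum:
  assumes "s < n"
  shows "(\<Sum>i<n. length (MLf n s t i) + length (MRf n s t i)) \<le> 2"
proof -
  define A where "A i = (if ml0 n s t i then 1 else 0) + (if mr0 n s t i then (1::nat) else 0)" for i
  define B where "B i = (if ml1 n s t i then 1 else 0) + (if mr1 n s t i then (1::nat) else 0)" for i
  have e: "length (MLf n s t i) + length (MRf n s t i) = A i + B i" for i
    by (simp add: MLf_def MRf_def A_def B_def)
  have a: "(\<Sum>i<n. A i) \<le> 1" unfolding A_def
    apply (rule sum_le1)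
      apply (rule uniq(4)[OF assms]; assumption)
     apply (rule uniq(5)[OF assms]; assumption)
    apply (rule uniq(6)[OF assms]; assumption)
    done
  have b: "(\<Sum>i<n. B i) \<le> 1" unfolding B_def
    apply (rule sum_le1)
      apply (rule uniq(1)[OF assms]; assumption)
     apply (rule uniq(2)[OF assms]; assumption)
    apply (rule uniq(3)[OF assms]; assumption)
    done
  have "(\<Sum>i<n. length (MLf n s t i) + length (MRf n s t i)) = (\<Sum>i<n. A i) + (\<Sum>i<n. B i)"
    unfolding e by (rule sum.distrib)
  then show ?thesis using a b by linarith
qed

lemma gzero:
  assumes "s < n" "3 * n \<le> t"
  shows "(\<Sum>i<n. length (MLf n s t i) + length (MRf n s t i)) = 0"
proof -
  have "length (MLf n s t i) + length (MRf n s t i) = 0" if "i < n" for i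
  proof -
    have "HH n s i < t" using assms that by (auto simp: HH_def dst_def)
    note L = late[OF assms(1) that this]
    then show ?thesis by (simp add: MLf_def MRf_def)
  qed
  then show ?thesis by simp
qed

lemma bits_ok:
  assumes "s < n"
  shows "bits_sent (esc k) n s T \<le> 6 * n"
proof -
  define g where "g t = (\<Sum>i<n. length (MLf n s t i) + length (MRf n s t i))" for t
  have bs: "bits_sent (esc k) n s T = (\<Sum>t<T. g t)"
    unfolding bits_sent_def g_def by (simp only: exec_ok[OF assms] fst_conv snd_conv)
  have "(\<Sum>t<T. g t) \<le> 2 * min T (3 * n)" for T
  proof (induction T)
    case 0 then show ?case by simp
  next
    case (Suc T)
    show ?case
    proof (cases "3 * n \<le> T")
      case True
      then have "g T = 0" using gzero[OF assms True] by (simp add: g_def)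
      then show ?thesis using Suc True by simp
    next
      case False
      have "g T \<le> 2" using gsum[OF assms] by (simp add: g_def)
      then show ?thesis using Suc False by simp
    qed
  qed
  moreover have "2 * min T (3 * n) \<le> 6 * n" by simp
  ultimately show ?thesis using bs by (metis order_trans)
qed




lemma mem_ok:
  assumes "s < n" "i < n" "1 \<le> k" "CS k n s t i = Some st"
  shows "real (esc_mem st) \<le> 2 * log 2 (real n) + log 2 (real k) + 14"
proof -
  define \<tau> where "\<tau> = min t (HH n s i)"
  have st: "st = stf k n s \<tau> i" using assms(4) unfolding CS_def \<tau>_def by (auto split: if_splits)
  have n1: "1 \<le> 2 * n" using assms by simp
  have c1: "m \<le> 2 * n" if "esc_cl st = Some m" for m
    using that assms(2) unfolding st stf_def CLf_def by (auto split: if_splits)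
  have c2: "m \<le> 2 * n" if "esc_cr st = Some m" for m
    using that assms(2) unfolding st stf_def CRf_def by (auto split: if_splits)
  have c3: "m \<le> k" if "esc_col st = Some m" for m
  proof -
    have m: "m = i * k div n + 1" using that assms(2) unfolding st stf_def esc_color_def by (auto split: if_splits)
    have "i * k < k * n" using assms by simp
    then have "i * k div n < k" by (simp add: div_less_iff_less_mult)
    then show ?thesis using m by simp
  qed
  have o1: "real (obits (esc_cl st)) \<le> 2 + log 2 (real (2*n))" by (rule obits_log[OF c1 n1])
  have o2: "real (obits (esc_cr st)) \<le> 2 + log 2 (real (2*n))" by (rule obits_log[OF c2 n1])
  have o3: "real (obits (esc_col st)) \<le> 2 + log 2 (real k)" by (rule obits_log[OF c3 assms(3)])
  have l: "log 2 (real (2*n)) = 1 + log 2 (real n)" using assms(2) by (simp add: log_mult)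
  have "real (esc_mem st) = real (obits (esc_cl st)) + real (obits (esc_cr st)) + real (obits (esc_col st)) + 6"
    by (simp add: esc_mem_def)
  then show ?thesis using o1 o2 o3 l by linarith
qed

lemma final_ok:
  assumes "s < n" "i < n"
  shows "fst (exec (esc k) n s (3 * n - 1)) i = Some (stf k n s (HH n s i) i)"
    "esc_col (stf k n s (HH n s i) i) = Some (i * k div n + 1)"
proof -
  have "dst s i \<le> 3 * n - 1" "HH n s i \<le> 3 * n - 1" using assms by (auto simp: HH_def dst_def)
  then show "fst (exec (esc k) n s (3 * n - 1)) i = Some (stf k n s (HH n s i) i)"
    using assms by (simp add: exec_ok CS_def)
  show "esc_col (stf k n s (HH n s i) i) = Some (i * k div n + 1)"
    using assms by (simp add: stf_def esc_color_def)
qed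

theorem theorem4:
  "\<exists>C::real. \<forall>n k s. 1 \<le> k \<longrightarrow> s < n \<longrightarrow>
     (\<forall>i<n. \<exists>st c. fst (exec (esc k) n s (3 * n - 1)) i = Some st \<and> la_out (esc k) st = Some c)
   \<and> is_ribbon n k (\<lambda>i. the (la_out (esc k) (the (fst (exec (esc k) n s (3 * n - 1)) i))))
   \<and> (\<forall>T. bits_sent (esc k) n s T \<le> 6 * n)
   \<and> (\<forall>t i st. i < n \<longrightarrow> fst (exec (esc k) n s t) i = Some st \<longrightarrow>
        real (esc_mem st) \<le> 2 * log 2 (real n) + log 2 (real k) + C)"
proof (rule exI[of _ 14], intro allI impI)
  fix n k s :: nat assume k: "1 \<le> k" and s: "s < n"
  have lo: "la_out (esc k) = esc_col" by (simp add: esc_def)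
  have P1: "\<forall>i<n. \<exists>st c. fst (exec (esc k) n s (3 * n - 1)) i = Some st \<and> la_out (esc k) st = Some c"
    using final_ok[OF s, of _ k] lo by auto
  have P2: "is_ribbon n k (\<lambda>i. the (la_out (esc k) (the (fst (exec (esc k) n s (3 * n - 1)) i))))"
  proof (rule ribbon_cong[where g="\<lambda>i. i * k div n + 1"])
    fix i assume "i < n"
    then show "the (la_out (esc k) (the (fst (exec (esc k) n s (3 * n - 1)) i))) = i * k div n + 1"
      using final_ok[OF s, of i k] lo by simp
  next
    show "is_ribbon n k (\<lambda>i. i * k div n + 1)" using ribbon_color[of k n] k s by simp
  qed
  have P3: "\<forall>T. bits_sent (esc k) n s T \<le> 6 * n" using bits_ok[OF s] by blast
  have P4: "\<forall>t i st. i < n \<longrightarrow> fst (exec (esc k) n s t) i = Some st \<longrightarrow>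
        real (esc_mem st) \<le> 2 * log 2 (real n) + log 2 (real k) + 14"
  proof (intro allI impI)
    fix t i st assume "i < n" "fst (exec (esc k) n s t) i = Some st"
    then show "real (esc_mem st) \<le> 2 * log 2 (real n) + log 2 (real k) + 14"
      using mem_ok[OF s _ k, of i t st] exec_ok[OF s, of k t] by simp
  qed
  show "(\<forall>i<n. \<exists>st c. fst (exec (esc k) n s (3 * n - 1)) i = Some st \<and> la_out (esc k) st = Some c)
   \<and> is_ribbon n k (\<lambda>i. the (la_out (esc k) (the (fst (exec (esc k) n s (3 * n - 1)) i))))
   \<and> (\<forall>T. bits_sent (esc k) n s T \<le> 6 * n)
   \<and> (\<forall>t i st. i < n \<longrightarrow> fst (exec (esc k) n s t) i = Some st \<longrightarrow>
        real (esc_mem st) \<le> 2 * log 2 (real n) + log 2 (real k) + 14)"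
    using P1 P2 P3 P4 by blast
qed

end
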